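(* Let $G=(V,E)$ be a transitive and finite directed graph with in-degree at least $2$ at every vertex, and let $\widehat{G}=(\widehat{V},\widehat{E})$ be the graph obtained by repeatedly applying a $v$-lag at every vertex $v$ of in-degree at least $3$. Then $\widehat{G}$ is in-degree $2$-regular, and there is an embedding $V\subseteq\widehat{V}$ which extends to a bijection $\theta$ from the set $E^\bullet$ of finite paths of $G$ onto the set of finite paths in $\widehat{G}$ whose range and source lie in $V$.
   Context: A directed graph $G=(V,E,r,s)$; in-degree of $v$ is $|r^{-1}(v)|$; in-degree $2$-regular means every vertex has in-degree exactly $2$. Paths $e_1\cdots e_n$ satisfy $s(e_i)=r(e_{i+1})$, vertices are paths of length $0$; "edge from $u$ to $w$" has source $u$, range $w$; transitive means there is a path between any two vertices. The $v$-lag at a vertex $v$ of in-degree $d_v\ge3$: enumerate the edges with range $v$ as $e_0,\dots,e_{d_v-1}$ with sources $u_0,\dots,u_{d_v-1}$; keep all other vertices and edges; add vertices $v_1,\dots,v_{d_v-2}$, an edge $f_1$ from $v_1$ to $v$, edges $f_i$ from $v_i$ to $v_{i-1}$ ($2\le i\le d_v-2$); replace $e_0$ by $\hat e_0$ from $u_0$ to $v$, $e_j$ by $\hat e_j$ from $u_j$ to $v_j$ ($1\le j\le d_v-2$), $e_{d_v-1}$ by $\hat e_{d_v-1}$ from $u_{d_v-1}$ to $v_{d_v-2}$. Only edges into $v$ change, so lags at different vertices commute. The map $\theta$ at one lag sends vertices to themselves, edges not into $v$ to themselves, $e_j$ to the path $f_1\cdots f_j\hat e_j$ (with $f_1\cdots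 f_{d_v-2}\hat e_{d_v-1}$ for $j=d_v-1$ and $\hat e_0$ for $j=0$), extended to paths by concatenation; the $\theta$ for $\widehat{G}$ is the composite of these maps. *)

theory Defs
  imports "Graph_Theory.Digraph"
begin

text \<open>Conventions: a directed graph G = (V,E,r,s) is a pre_digraph with verts = V, arcs = E,
  head = r (range) and tail = s (source).\<close>

text \<open>Finite paths: a vertex (length 0, Inl v), or a nonempty list of edges e_1 ... e_n
  (Inr [e_1,...,e_n]) with s(e_i) = r(e_(i+1)).\<close>

type_synonym ('a,'b) gpath = "'a + 'b list"

definition dpaths :: "('a,'b) pre_digraph \<Rightarrow> ('a,'b) gpath set" where
  "dpaths G = Inl ` verts G \<union>
     {Inr es | es. es \<noteq> [] \<and> set es \<subseteq> arcs G \<and>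
        (\<forall>i. Suc i < length es \<longrightarrow> tail G (es ! i) = head G (es ! Suc i))}"

fun prange :: "('a,'b) pre_digraph \<Rightarrow> ('a,'b) gpath \<Rightarrow> 'a" where
  "prange G (Inl v) = v"
| "prange G (Inr es) = head G (hd es)"

fun psource :: "('a,'b) pre_digraph \<Rightarrow> ('a,'b) gpath \<Rightarrow> 'a" where
  "psource G (Inl v) = v"
| "psource G (Inr es) = tail G (last es)"

definition transitive_graph :: "('a,'b) pre_digraph \<Rightarrow> bool" where
  "transitive_graph G \<longleftrightarrow>
     (\<forall>u\<in>verts G. \<forall>w\<in>verts G. \<exists>p\<in>dpaths G. prange G p = u \<and> psource G p = w)"

definition in_degree_2_regular :: "('a,'b) pre_digraph \<Rightarrow> bool" where
  "in_degree_2_regular G \<longleftrightarrow> (\<forall>v\<in>verts G. in_degree G v = 2)"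

definition valid_enum :: "('a,'b) pre_digraph \<Rightarrow> ('a \<Rightarrow> nat \<Rightarrow> 'b) \<Rightarrow> bool" where
  "valid_enum G enum \<longleftrightarrow>
     (\<forall>v\<in>verts G. bij_betw (enum v) {..<in_degree G v} (in_arcs G v))"

definition eidx :: "('a,'b) pre_digraph \<Rightarrow> ('a \<Rightarrow> nat \<Rightarrow> 'b) \<Rightarrow> 'b \<Rightarrow> nat" where
  "eidx G enum e = (THE j. j < in_degree G (head G e) \<and> enum (head G e) j = e)"

text \<open>Position of the new range of the edge hat e: for e = e_j into v with d_v \<ge> 3,
  hat e_0 goes into v = v_0, hat e_j into v_j for 1 \<le> j \<le> d_v - 2, and hat e_(d_v-1) into
  v_(d_v-2); if d_v < 3 the edge is unchanged (index 0, i.e. v itself).\<close>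

definition lagpos :: "('a,'b) pre_digraph \<Rightarrow> ('a \<Rightarrow> nat \<Rightarrow> 'b) \<Rightarrow> 'b \<Rightarrow> nat" where
  "lagpos G enum e =
     (if 3 \<le> in_degree G (head G e)
      then min (eidx G enum e) (in_degree G (head G e) - 2) else 0)"

text \<open>The graph \<widehat>G obtained by performing the v-lag at every vertex v with d_v \<ge> 3
  (lags at different vertices commute, so they are performed simultaneously).
  Vertices: (v,0) is the original vertex v; (v,i) for 1 \<le> i \<le> d_v - 2 is the new vertex v_i.
  Edges: Inl e is hat e (or e itself if it is unchanged); Inr (v,i) is the new edge f_i at v,
  from v_i to v_(i-1) (where v_0 = v).\<close>

definition lag_graph :: "('a,'b) pre_digraph \<Rightarrow> ('a \<Rightarrow> nat \<Rightarrow> 'b) \<Rightarrow>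
    ('a \<times> nat, 'b + ('a \<times> nat)) pre_digraph" where
  "lag_graph G enum =
    \<lparr> verts = {(v,i). v \<in> verts G \<and> (i = 0 \<or> (3 \<le> in_degree G v \<and> 1 \<le> i \<and> i \<le> in_degree G v - 2))},
      arcs = Inl ` arcs G \<union>
             Inr ` {(v,i). v \<in> verts G \<and> 3 \<le> in_degree G v \<and> 1 \<le> i \<and> i \<le> in_degree G v - 2},
      tail = (\<lambda>x. case x of Inl e \<Rightarrow> (tail G e, 0) | Inr (v,i) \<Rightarrow> (v,i)),
      head = (\<lambda>x. case x of Inl e \<Rightarrow> (head G e, lagpos G enum e) | Inr (v,i) \<Rightarrow> (v, i - 1)) \<rparr>"

text \<open>The map theta on edges: e_j \<mapsto> f_1 ... f_k hat e_j with k = lagpos (so k = j, or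
  d_v - 2 for j = d_v - 1, and the path hat e_0 for j = 0); unchanged edges map to themselves.\<close>

definition theta_edge :: "('a,'b) pre_digraph \<Rightarrow> ('a \<Rightarrow> nat \<Rightarrow> 'b) \<Rightarrow> 'b \<Rightarrow>
    ('b + ('a \<times> nat)) list" where
  "theta_edge G enum e =
     map (\<lambda>i. Inr (head G e, i)) [1..<Suc (lagpos G enum e)] @ [Inl e]"

fun theta :: "('a,'b) pre_digraph \<Rightarrow> ('a \<Rightarrow> nat \<Rightarrow> 'b) \<Rightarrow>
    ('a,'b) gpath \<Rightarrow> ('a \<times> nat, 'b + ('a \<times> nat)) gpath" where
  "theta G enum (Inl v) = Inl (v, 0)"
| "theta G enum (Inr es) = Inr (concat (map (theta_edge G enum) es))"

end

theory Submission
  imports Defs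
begin

definition ispath :: "('a,'b) pre_digraph \<Rightarrow> 'b list \<Rightarrow> bool" where
  "ispath G es \<longleftrightarrow> es \<noteq> [] \<and> set es \<subseteq> arcs G \<and> successively (\<lambda>a b. tail G a = head G b) es"

lemma Inr_dpaths: "Inr es \<in> dpaths G \<longleftrightarrow> ispath G es"
  unfolding dpaths_def ispath_def successively_conv_nth by auto

lemma Inl_dpaths: "Inl v \<in> dpaths G \<longleftrightarrow> v \<in> verts G"
  unfolding dpaths_def by auto

lemma eidx_props:
  assumes "wf_digraph G" "valid_enum G enum" "e \<in> arcs G"
  shows "eidx G enum e < in_degree G (head G e) \<and> enum (head G e) (eidx G enum e) = e"
proof -
  let ?v = "head G e"
  have v: "?v \<in> verts G" by (rule wf_digraph.head_in_verts[OF assms(1) assms(3)])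
  have b: "bij_betw (enum ?v) {..<in_degree G ?v} (in_arcs G ?v)" using assms(2) v unfolding valid_enum_def by (rule bspec)
  have "e \<in> in_arcs G ?v" using assms(3) by (simp add: in_arcs_def)
  then obtain j where j: "j < in_degree G ?v" "enum ?v j = e" using b
    by (metis bij_betw_def imageE lessThan_iff)
  have u: "\<And>j'. j' < in_degree G ?v \<and> enum ?v j' = e \<Longrightarrow> j' = j"
    using b j unfolding bij_betw_def inj_on_def by auto
  have "eidx G enum e = j" unfolding eidx_def
    by (rule the_equality) (use j in simp, use u in blast)
  then show ?thesis using j by simp
qed

lemma enum_props:
  assumes "valid_enum G enum" "v \<in> verts G" "j < in_degree G v"
  shows "enum v j \<in> arcs G \<and> head G (enum v j) = v \<and> eidx G enum (enum v j) = j"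
proof -
  have b: "bij_betw (enum v) {..<in_degree G v} (in_arcs G v)" using assms(1,2) unfolding valid_enum_def by (rule bspec)
  then have e: "enum v j \<in> in_arcs G v" using bij_betwE[OF b] assms(3) by simp
  then have h: "enum v j \<in> arcs G" "head G (enum v j) = v" by (auto simp: in_arcs_def)
  have u: "\<And>j'. j' < in_degree G v \<and> enum v j' = enum v j \<Longrightarrow> j' = j"
    using b assms(3) unfolding bij_betw_def inj_on_def by auto
  have "eidx G enum (enum v j) = j" unfolding eidx_def
    by (rule the_equality) (use assms(3) h in simp, use u h in simp)
  then show ?thesis using h by simp
qed

lemma lag_simps:
  "verts (lag_graph G enum) = {(v,i). v \<in> verts G \<and> (i = 0 \<or> (3 \<le> in_degree G v \<and> 1 \<le> i \<and> i \<le> in_degree G v - 2))}"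
  "arcs (lag_graph G enum) = Inl ` arcs G \<union>
             Inr ` {(v,i). v \<in> verts G \<and> 3 \<le> in_degree G v \<and> 1 \<le> i \<and> i \<le> in_degree G v - 2}"
  "tail (lag_graph G enum) (Inl e) = (tail G e, 0)"
  "tail (lag_graph G enum) (Inr (v,i)) = (v,i)"
  "head (lag_graph G enum) (Inl e) = (head G e, lagpos G enum e)"
  "head (lag_graph G enum) (Inr (v,i)) = (v,i - 1)"
  by (simp_all add: lag_graph_def)


lemma wf_of_fin: "fin_digraph G \<Longrightarrow> wf_digraph G"
  by (simp add: fin_digraph_def)

lemma indeg_lag:
  assumes fin: "fin_digraph G" and ve: "valid_enum G enum"
    and deg: "\<forall>v\<in>verts G. 2 \<le> in_degree G v"
    and x: "x \<in> verts (lag_graph G enum)"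
  shows "in_degree (lag_graph G enum) x = 2"
proof -
  have wf: "wf_digraph G" using fin by (rule wf_of_fin)
  obtain v i where xv: "x = (v,i)" by (cases x)
  define d where "d = in_degree G v"
  have v: "v \<in> verts G" and i: "i = 0 \<or> (3 \<le> d \<and> 1 \<le> i \<and> i \<le> d - 2)"
    using x xv by (auto simp: lag_simps d_def)
  have d2: "2 \<le> d" using deg v d_def by auto
  define A where "A = {e\<in>arcs G. head G e = v \<and> lagpos G enum e = i}"
  define B where "B = {y. y = (v, Suc i) \<and> 3 \<le> d \<and> Suc i \<le> d - 2}"
  define lp where "lp = (\<lambda>j. if 3 \<le> d then min j (d - 2) else 0)"
  have ia: "in_arcs (lag_graph G enum) (v,i) = Inl ` A \<union> Inr ` B"
  proof (rule set_eqI)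
    fix a show "a \<in> in_arcs (lag_graph G enum) (v,i) \<longleftrightarrow> a \<in> Inl ` A \<union> Inr ` B"
    proof (cases a)
      case (Inl e) then show ?thesis by (auto simp: in_arcs_def lag_simps A_def)
    next
      case (Inr y) then show ?thesis
        using v by (cases y) (auto simp: in_arcs_def lag_simps B_def d_def)
    qed
  qed
  have finA: "finite A" unfolding A_def using fin_digraph.finite_arcs[OF fin] by auto
  have finB: "finite B" unfolding B_def by auto
  have c1: "card (Inl ` A \<union> Inr ` B) = card A + card B"
    by (subst card_Un_disjoint) (auto simp: finA finB card_image)
  have Aeq: "A = enum v ` {j. j < d \<and> lp j = i}"
  proof (rule set_eqI, rule iffI)
    fix e assume "e \<in> A"
    then have e: "e \<in> arcs G" "head G e = v" "lagpos G enum e = i" by (auto simp: A_def)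
    have p: "eidx G enum e < d" "enum v (eidx G enum e) = e"
      using eidx_props[OF wf ve e(1)] e(2) d_def by auto
    have "lp (eidx G enum e) = i" using e(3) unfolding lagpos_def lp_def d_def e(2) by simp
    then show "e \<in> enum v ` {j. j < d \<and> lp j = i}" using p by (metis (mono_tags, lifting) imageI mem_Collect_eq)
  next
    fix e assume "e \<in> enum v ` {j. j < d \<and> lp j = i}"
    then obtain j where j: "j < d" "lp j = i" "e = enum v j" by auto
    have p: "enum v j \<in> arcs G \<and> head G (enum v j) = v \<and> eidx G enum (enum v j) = j"
      using enum_props[OF ve v] j(1) d_def by auto
    then show "e \<in> A" using j unfolding A_def lagpos_def lp_def d_def by auto
  qed
  have injv: "inj_on (enum v) {..<d}" using ve v unfolding valid_enum_def bij_betw_def d_def by auto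
  have cA: "card A = card {j. j < d \<and> lp j = i}"
    unfolding Aeq by (rule card_image) (rule inj_on_subset[OF injv], auto)
  have main: "card {j. j < d \<and> lp j = i} + card B = 2"
  proof (cases "3 \<le> d")
    case False
    then have "d = 2" "i = 0" using d2 i by auto
    moreover have "{j. j < (2::nat) \<and> True} = {0,1}" by auto
    ultimately show ?thesis using False by (simp add: lp_def B_def)
  next
    case True
    consider "i = 0" | "1 \<le> i" "i < d - 2" | "i = d - 2" using i True by linarith
    then show ?thesis
    proof cases
      case 1
      have "{j. j < d \<and> lp j = i} = {0}" using True 1 by (auto simp: lp_def)
      moreover have "B = {(v,1)}" using True 1 by (auto simp: B_def)
      ultimately show ?thesis by simp
    next
      case 2
      have "{j. j < d \<and> lp j = i} = {i}" using True 2 by (auto simp: lp_def)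
      moreover have "B = {(v,Suc i)}" using True 2 by (auto simp: B_def)
      ultimately show ?thesis by simp
    next
      case 3
      have "{j. j < d \<and> lp j = i} = {d-2, d-1}" using True 3 by (auto simp: lp_def)
      moreover have "B = {}" using True 3 by (auto simp: B_def)
      moreover have "d - 2 \<noteq> d - 1" using True by simp
      ultimately show ?thesis by simp
    qed
  qed
  show ?thesis unfolding xv in_degree_def ia c1 cA using main by simp
qed


lemma te_basic:
  "theta_edge G enum e \<noteq> []"
  "last (theta_edge G enum e) = Inl e"
  "head (lag_graph G enum) (hd (theta_edge G enum e)) = (head G e, 0)"
proof -
  show "theta_edge G enum e \<noteq> []" "last (theta_edge G enum e) = Inl e"
    by (simp_all add: theta_edge_def)
  show "head (lag_graph G enum) (hd (theta_edge G enum e)) = (head G e, 0)"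
  proof (cases "lagpos G enum e")
    case 0 then show ?thesis by (simp add: theta_edge_def lag_simps)
  next
    case (Suc k)
    have "[1..<Suc (lagpos G enum e)] \<noteq> []" using Suc by (simp del: upt_Suc)
    moreover have "hd [1..<Suc (lagpos G enum e)] = 1" using Suc by (intro hd_upt) simp
    ultimately show ?thesis by (simp add: theta_edge_def lag_simps hd_map del: upt_Suc)
  qed
qed

lemma te_succ:
  "successively (\<lambda>a b. tail (lag_graph G enum) a = head (lag_graph G enum) b) (theta_edge G enum e)"
proof -
  let ?k = "lagpos G enum e"
  let ?v = "head G e"
  let ?l = "theta_edge G enum e"
  have len: "length ?l = Suc ?k" by (simp add: theta_edge_def)
  have nth: "\<And>n. n < Suc ?k \<Longrightarrow> ?l ! n = (if n < ?k then Inr (?v, Suc n) else Inl e)"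
    by (auto simp: theta_edge_def nth_append)
  show ?thesis unfolding successively_conv_nth
  proof (intro allI impI)
    fix n assume n: "Suc n < length ?l"
    then have nk: "n < ?k" using len by simp
    have a: "?l ! n = Inr (?v, Suc n)" using nth[of n] nk by simp
    have ta: "tail (lag_graph G enum) (?l ! n) = (?v, Suc n)" unfolding a by (simp only: lag_simps)
    show "tail (lag_graph G enum) (?l ! n) = head (lag_graph G enum) (?l ! Suc n)"
    proof (cases "Suc n < ?k")
      case True
      then have "?l ! Suc n = Inr (?v, Suc (Suc n))" using nth[of "Suc n"] by simp
      then show ?thesis unfolding ta by (simp only: lag_simps) simp
    next
      case False
      then have "?l ! Suc n = Inl e" "Suc n = ?k" using nth[of "Suc n"] nk by auto
      then show ?thesis unfolding ta by (simp only: lag_simps)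
    qed
  qed
qed

lemma te_arcs:
  assumes "wf_digraph G" "e \<in> arcs G"
  shows "set (theta_edge G enum e) \<subseteq> arcs (lag_graph G enum)"
proof -
  have hv: "head G e \<in> verts G" by (rule wf_digraph.head_in_verts[OF assms(1) assms(2)])
  have k: "\<And>i. 1 \<le> i \<Longrightarrow> i \<le> lagpos G enum e \<Longrightarrow>
      3 \<le> in_degree G (head G e) \<and> i \<le> in_degree G (head G e) - 2"
  proof -
    fix i assume i: "1 \<le> i" "i \<le> lagpos G enum e"
    show "3 \<le> in_degree G (head G e) \<and> i \<le> in_degree G (head G e) - 2"
    proof (cases "3 \<le> in_degree G (head G e)")
      case True
      then have "lagpos G enum e = min (eidx G enum e) (in_degree G (head G e) - 2)"
        unfolding lagpos_def by simp
      then show ?thesis using True i by linarith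
    next
      case False
      then have "lagpos G enum e = 0" unfolding lagpos_def by simp
      then show ?thesis using i by simp
    qed
  qed
  show ?thesis
  proof
    fix a assume "a \<in> set (theta_edge G enum e)"
    then have "a = Inl e \<or> (\<exists>i. 1 \<le> i \<and> i \<le> lagpos G enum e \<and> a = Inr (head G e, i))"
      unfolding theta_edge_def by auto
    then show "a \<in> arcs (lag_graph G enum)"
    proof
      assume "a = Inl e" then show ?thesis using assms(2) by (simp add: lag_simps)
    next
      assume "\<exists>i. 1 \<le> i \<and> i \<le> lagpos G enum e \<and> a = Inr (head G e, i)"
      then obtain i where i: "1 \<le> i" "i \<le> lagpos G enum e" "a = Inr (head G e, i)" by blast
      then show ?thesis using k[OF i(1,2)] hv by (simp add: lag_simps)
    qed
  qed
qed

lemma theta_path: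
  assumes wf: "wf_digraph G"
  shows "ispath G es \<Longrightarrow> ispath (lag_graph G enum) (concat (map (theta_edge G enum) es))
    \<and> head (lag_graph G enum) (hd (concat (map (theta_edge G enum) es))) = (head G (hd es), 0)
    \<and> tail (lag_graph G enum) (last (concat (map (theta_edge G enum) es))) = (tail G (last es), 0)"
proof (induction es)
  case Nil then show ?case by (simp add: ispath_def)
next
  case (Cons e es)
  let ?L = "lag_graph G enum"
  have e: "e \<in> arcs G" using Cons.prems by (simp add: ispath_def)
  show ?case
  proof (cases "es = []")
    case True
    then show ?thesis using te_basic[of G enum e] te_succ[of G enum e] te_arcs[OF wf e, of enum]
      by (simp add: ispath_def lag_simps)
  next
    case False
    have pe: "ispath G es" and link: "tail G e = head G (hd es)"
      using Cons.prems False by (auto simp: ispath_def successively_Cons)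
    note IH = Cons.IH[OF pe]
    let ?C = "concat (map (theta_edge G enum) es)"
    have Cne: "?C \<noteq> []" using IH by (simp add: ispath_def)
    have s1: "successively (\<lambda>a b. tail ?L a = head ?L b) (theta_edge G enum e)"
      by (rule te_succ)
    have s2: "successively (\<lambda>a b. tail ?L a = head ?L b) ?C"
      using IH by (simp add: ispath_def)
    have s3: "tail ?L (last (theta_edge G enum e)) = head ?L (hd ?C)"
      using IH te_basic(2)[of G enum e] link by (simp add: lag_simps)
    have "successively (\<lambda>a b. tail ?L a = head ?L b) (theta_edge G enum e @ ?C)"
      using s1 s2 s3 by (simp only: successively_append_iff) blast
    moreover have "set (theta_edge G enum e @ ?C) \<subseteq> arcs ?L"
      using IH te_arcs[OF wf e, of enum] by (simp add: ispath_def)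
    ultimately have "ispath ?L (theta_edge G enum e @ ?C)"
      using te_basic(1)[of G enum e] unfolding ispath_def by blast
    moreover have "hd (theta_edge G enum e @ ?C) = hd (theta_edge G enum e)"
      using te_basic(1)[of G enum e] by simp
    moreover have "last (theta_edge G enum e @ ?C) = last ?C"
      using Cne by simp
    ultimately show ?thesis using IH te_basic(3)[of G enum e] False by simp
  qed
qed

definition unl :: "('b + 'c) list \<Rightarrow> 'b list" where
  "unl fs = concat (map (\<lambda>x. case x of Inl e \<Rightarrow> [e] | Inr _ \<Rightarrow> []) fs)"

lemma unl_theta: "unl (concat (map (theta_edge G enum) es)) = es"
proof -
  have "\<And>e. unl (theta_edge G enum e) = [e]" by (simp add: unl_def theta_edge_def o_def)
  then show ?thesis by (induction es) (simp_all add: unl_def)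
qed

lemma theta_inj: "inj (theta G enum)"
proof (rule injI)
  fix p q assume eq: "theta G enum p = theta G enum q"
  show "p = q"
  proof (cases p)
    case (Inl v) then show ?thesis using eq by (cases q) auto
  next
    case (Inr es)
    show ?thesis
    proof (cases q)
      case (Inl w) then show ?thesis using eq Inr by simp
    next
      case (Inr es')
      then have "concat (map (theta_edge G enum) es) = concat (map (theta_edge G enum) es')"
        using eq \<open>p = Inr es\<close> by simp
      then have "unl (concat (map (theta_edge G enum) es)) = unl (concat (map (theta_edge G enum) es'))"
        by simp
      then have "es = es'" by (simp only: unl_theta)
      then show ?thesis using Inr \<open>p = Inr es\<close> by simp
    qed
  qed
qed


lemma block:
  assumes wf: "wf_digraph G"
  shows "ispath (lag_graph G enum) fs \<Longrightarrow> snd (tail (lag_graph G enum) (last fs)) = 0 \<Longrightarrow>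
    head (lag_graph G enum) (hd fs) = (v,m) \<Longrightarrow>
    \<exists>e rest. e \<in> arcs G \<and> head G e = v \<and> m \<le> lagpos G enum e \<and>
      fs = map (\<lambda>i. Inr (v,i)) [Suc m..<Suc (lagpos G enum e)] @ Inl e # rest \<and>
      (rest \<noteq> [] \<longrightarrow> ispath (lag_graph G enum) rest \<and> head (lag_graph G enum) (hd rest) = (tail G e, 0)
         \<and> tail (lag_graph G enum) (last rest) = tail (lag_graph G enum) (last fs))"
proof (induction fs arbitrary: m)
  case Nil then show ?case by (simp add: ispath_def)
next
  case (Cons x fs)
  let ?L = "lag_graph G enum"
  have xa: "x \<in> arcs ?L" using Cons.prems(1) by (simp add: ispath_def)
  have pfs: "fs \<noteq> [] \<Longrightarrow> ispath ?L fs \<and> tail ?L x = head ?L (hd fs)"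
    using Cons.prems(1) by (auto simp: ispath_def successively_Cons)
  show ?case
  proof (cases x)
    case (Inl e)
    have e: "e \<in> arcs G" using xa Inl by (auto simp: lag_simps)
    have hm: "head G e = v" "lagpos G enum e = m" using Cons.prems(3) Inl by (simp_all add: lag_simps)
    have c: "fs \<noteq> [] \<longrightarrow> ispath ?L fs \<and> head ?L (hd fs) = (tail G e, 0)
         \<and> tail ?L (last fs) = tail ?L (last (x # fs))"
    proof
      assume fne: "fs \<noteq> []"
      have "last (x # fs) = last fs" using fne by simp
      then show "ispath ?L fs \<and> head ?L (hd fs) = (tail G e, 0)
         \<and> tail ?L (last fs) = tail ?L (last (x # fs))"
        using pfs[OF fne] Inl by (simp add: lag_simps)
    qed
    have eqn: "x # fs = map (\<lambda>i. Inr (v,i)) [Suc m..<Suc (lagpos G enum e)] @ Inl e # fs"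
      using hm Inl by simp
    show ?thesis using e hm eqn c by blast
  next
    case (Inr y)
    obtain w i where y: "y = (w,i)" by (cases y)
    have i1: "1 \<le> i" using xa Inr y by (auto simp: lag_simps)
    have wi: "w = v" "i = Suc m" using Cons.prems(3) Inr y i1 by (auto simp: lag_simps)
    have fne: "fs \<noteq> []"
    proof
      assume "fs = []"
      then have "snd (tail ?L (last (x # fs))) = i" using Inr y by (simp add: lag_simps)
      then show False using Cons.prems(2) i1 by simp
    qed
    have p: "ispath ?L fs" "head ?L (hd fs) = (v, Suc m)"
      using pfs[OF fne] Inr y wi by (auto simp: lag_simps)
    have t: "snd (tail ?L (last fs)) = 0" using Cons.prems(2) fne by simp
    obtain e rest where er: "e \<in> arcs G" "head G e = v" "Suc m \<le> lagpos G enum e"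
      "fs = map (\<lambda>i. Inr (v,i)) [Suc (Suc m)..<Suc (lagpos G enum e)] @ Inl e # rest"
      "rest \<noteq> [] \<longrightarrow> ispath ?L rest \<and> head ?L (hd rest) = (tail G e, 0)
         \<and> tail ?L (last rest) = tail ?L (last fs)"
      using Cons.IH[OF p(1) t p(2)] by blast
    have up: "[Suc m..<Suc (lagpos G enum e)] = Suc m # [Suc (Suc m)..<Suc (lagpos G enum e)]"
      by (rule upt_conv_Cons) (use er(3) in simp)
    have "x # fs = map (\<lambda>i. Inr (v,i)) [Suc m..<Suc (lagpos G enum e)] @ Inl e # rest"
      unfolding up using er(4) Inr y wi by simp
    moreover have lastx: "last (x # fs) = last fs" using fne by simp
    moreover have "rest \<noteq> [] \<longrightarrow> ispath ?L rest \<and> head ?L (hd rest) = (tail G e, 0)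
         \<and> tail ?L (last rest) = tail ?L (last (x # fs))"
      unfolding lastx using er(5) .
    moreover have "m \<le> lagpos G enum e" using er(3) by simp
    ultimately show ?thesis using er(1,2) by blast
  qed
qed

lemma decomp:
  assumes wf: "wf_digraph G"
  shows "ispath (lag_graph G enum) fs \<Longrightarrow> snd (head (lag_graph G enum) (hd fs)) = 0 \<Longrightarrow>
    snd (tail (lag_graph G enum) (last fs)) = 0 \<Longrightarrow>
    \<exists>es. ispath G es \<and> fs = concat (map (theta_edge G enum) es)"
proof (induction "length fs" arbitrary: fs rule: less_induct)
  case less
  let ?L = "lag_graph G enum"
  obtain v where hv: "head ?L (hd fs) = (v, 0)" using less.prems(2) by (cases "head ?L (hd fs)") auto
  obtain e rest where er: "e \<in> arcs G" "head G e = v"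
      "fs = map (\<lambda>i. Inr (v,i)) [Suc 0..<Suc (lagpos G enum e)] @ Inl e # rest"
      "rest \<noteq> [] \<longrightarrow> ispath ?L rest \<and> head ?L (hd rest) = (tail G e, 0)
         \<and> tail ?L (last rest) = tail ?L (last fs)"
    using block[OF wf less.prems(1,3) hv] by blast
  have fs: "fs = theta_edge G enum e @ rest"
    using er(2,3) by (simp add: theta_edge_def)
  show ?case
  proof (cases "rest = []")
    case True
    then show ?thesis using fs er(1) by (intro exI[of _ "[e]"]) (simp add: ispath_def)
  next
    case False
    have r: "ispath ?L rest" "head ?L (hd rest) = (tail G e, 0)" "tail ?L (last rest) = tail ?L (last fs)"
      using er(4) False by blast+
    have len: "length rest < length fs" using fs te_basic(1)[of G enum e] by simp
    obtain es where es: "ispath G es" "rest = concat (map (theta_edge G enum) es)"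
    proof -
      have "snd (head ?L (hd rest)) = 0" using r(2) by simp
      moreover have "snd (tail ?L (last rest)) = 0" using r(3) less.prems(3) by simp
      ultimately show ?thesis using less.hyps[OF len r(1)] that by blast
    qed
    have esne: "es \<noteq> []" using es by (simp add: ispath_def)
    then obtain e' es' where es': "es = e' # es'" by (cases es) auto
    have "hd rest = hd (theta_edge G enum e')" using es(2) es' te_basic(1)[of G enum e'] by simp
    then have "tail G e = head G e'" using r(2) te_basic(3)[of G enum e'] by simp
    then have "ispath G (e # es)" using es(1) es' er(1) by (simp add: ispath_def)
    moreover have "fs = concat (map (theta_edge G enum) (e # es))" using fs es(2) by simp
    ultimately show ?thesis by blast
  qed
qed

theorem corollary3p8:
  fixes G :: "('a,'b) pre_digraph" and enum :: "'a \<Rightarrow> nat \<Rightarrow> 'b"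
  assumes "fin_digraph G"
    and "transitive_graph G"
    and "\<forall>v\<in>verts G. 2 \<le> in_degree G v"
    and "valid_enum G enum"
  shows "in_degree_2_regular (lag_graph G enum)
    \<and> inj_on (\<lambda>v. (v, 0::nat)) (verts G)
    \<and> (\<lambda>v. (v, 0::nat)) ` verts G \<subseteq> verts (lag_graph G enum)
    \<and> bij_betw (theta G enum) (dpaths G)
         {p \<in> dpaths (lag_graph G enum).
            prange (lag_graph G enum) p \<in> (\<lambda>v. (v, 0)) ` verts G
          \<and> psource (lag_graph G enum) p \<in> (\<lambda>v. (v, 0)) ` verts G}"
proof -
  let ?L = "lag_graph G enum"
  let ?I = "(\<lambda>v. (v, 0::nat)) ` verts G"
  have wf: "wf_digraph G" using assms(1) by (rule wf_of_fin)
  have r1: "in_degree_2_regular ?L"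
    unfolding in_degree_2_regular_def using indeg_lag[OF assms(1) assms(4) assms(3)] by blast
  have r2: "inj_on (\<lambda>v. (v, 0::nat)) (verts G)" by (auto simp: inj_on_def)
  have r3: "?I \<subseteq> verts ?L" by (auto simp: lag_simps)
  have sub1: "theta G enum ` dpaths G \<subseteq> {p \<in> dpaths ?L. prange ?L p \<in> ?I \<and> psource ?L p \<in> ?I}"
  proof
    fix q assume "q \<in> theta G enum ` dpaths G"
    then obtain p where p: "p \<in> dpaths G" "q = theta G enum p" by blast
    show "q \<in> {p \<in> dpaths ?L. prange ?L p \<in> ?I \<and> psource ?L p \<in> ?I}"
    proof (cases p)
      case (Inl v)
      then have "v \<in> verts G" using p(1) by (simp add: Inl_dpaths)
      then show ?thesis using p(2) Inl by (simp add: Inl_dpaths lag_simps)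
    next
      case (Inr es)
      then have es: "ispath G es" using p(1) by (simp add: Inr_dpaths)
      note th = theta_path[OF wf es, of enum]
      have ha: "hd es \<in> arcs G" "last es \<in> arcs G" using es by (auto simp: ispath_def)
      have "head G (hd es) \<in> verts G" "tail G (last es) \<in> verts G"
        using wf_digraph.head_in_verts[OF wf ha(1)] wf_digraph.tail_in_verts[OF wf ha(2)] by simp_all
      then show ?thesis using th p(2) Inr by (simp add: Inr_dpaths)
    qed
  qed
  have sub2: "{p \<in> dpaths ?L. prange ?L p \<in> ?I \<and> psource ?L p \<in> ?I} \<subseteq> theta G enum ` dpaths G"
  proof
    fix q assume q: "q \<in> {p \<in> dpaths ?L. prange ?L p \<in> ?I \<and> psource ?L p \<in> ?I}"
    show "q \<in> theta G enum ` dpaths G"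
    proof (cases q)
      case (Inl x)
      then obtain v where v: "v \<in> verts G" "x = (v,0)" using q by auto
      then have "q = theta G enum (Inl v)" "Inl v \<in> dpaths G" using Inl by (simp_all add: Inl_dpaths)
      then show ?thesis by blast
    next
      case (Inr fs)
      then have fs: "ispath ?L fs" "snd (head ?L (hd fs)) = 0" "snd (tail ?L (last fs)) = 0"
        using q by (auto simp: Inr_dpaths)
      obtain es where "ispath G es" "fs = concat (map (theta_edge G enum) es)"
        using decomp[OF wf fs] by blast
      then have "q = theta G enum (Inr es)" "Inr es \<in> dpaths G" using Inr by (simp_all add: Inr_dpaths)
      then show ?thesis by blast
    qed
  qed
  have r4: "bij_betw (theta G enum) (dpaths G) {p \<in> dpaths ?L. prange ?L p \<in> ?I \<and> psource ?L p \<in> ?I}"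
    unfolding bij_betw_def using theta_inj[of G enum] sub1 sub2
    by (auto intro: inj_on_subset)
  show ?thesis using r1 r2 r3 r4 by blast
qed

end
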